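(* Let $M(\mathcal A)$ be the total space of a torus bundle $p\colon M(\mathcal A)\to S^1$ with monodromy $\mathcal A\in\mathrm{SL}(2,\mathbb Z)$, let $P$ be a spine of $M(\mathcal A)$, and let $F_t=p^{-1}(t)$ be any fiber. Then $K_t=P\cap F_t$ intersects every loop in $F_t$ representing a nonzero element of $\pi_1(F_t)\cong\mathbb Z^2$.
   Context: $M(\mathcal A)=T^2\times[0,1]/\big((x,1)\sim(\varphi(x),0)\big)$ with $\varphi$ a linear automorphism of $T^2$ inducing $\mathcal A$; $p$ is the projection to the circle. A polyhedron $P$ in the closed 3-manifold $M(\mathcal A)$ is a spine if $M(\mathcal A)\setminus P$ is an open 3-cell. *)

theory Defs
  imports "HOL-Analysis.Analysis"
begin

text \<open>Torus bundle M(A) over the circle with monodromy A in SL(2,Z), realised as the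
quotient of R^2 x R by the group generated by integer translations in the R^2 factor
and the map (x,s) to (A x, s - 1), so that (x,1) is identified with (A x, 0).\<close>

definition int_lattice :: "(real^2) set" where
  "int_lattice = {v. \<forall>i. v $ i \<in> \<int>}"

definition real_mat :: "int^2^2 \<Rightarrow> real^2^2" where
  "real_mat A = (\<chi> i j. real_of_int (A $ i $ j))"

definition tb_rel :: "int^2^2 \<Rightarrow> (((real^2) \<times> real) \<times> ((real^2) \<times> real)) set" where
  "tb_rel A = {((x, s), (y, r)). \<exists>n::nat. \<exists>v\<in>int_lattice.
       (y = (((*v) (real_mat A)) ^^ n) x + v \<and> r = s - real n)
     \<or> (x = (((*v) (real_mat A)) ^^ n) y + v \<and> s = r - real n)}"

text \<open>Underlying point set of M(A): equivalence classes.\<close>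
definition tb_space :: "int^2^2 \<Rightarrow> ((real^2) \<times> real) set set" where
  "tb_space A = UNIV // tb_rel A"

text \<open>Quotient topology on M(A).\<close>
definition tb_top :: "int^2^2 \<Rightarrow> ((real^2) \<times> real) set topology" where
  "tb_top A = topology (\<lambda>U. U \<subseteq> tb_space A \<and> open (\<Union>U))"

text \<open>Bundle projection p : M(A) -> S^1 = R/Z, the circle coordinate taken in [0,1).\<close>
definition tb_proj :: "((real^2) \<times> real) set \<Rightarrow> real" where
  "tb_proj c = frac (snd (SOME z. z \<in> c))"

text \<open>Fibre F_t = p^{-1}(t), t in R read modulo 1.\<close>
definition tb_fiber :: "int^2^2 \<Rightarrow> real \<Rightarrow> ((real^2) \<times> real) set set" where
  "tb_fiber A t = {c \<in> tb_space A. tb_proj c = frac t}"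

text \<open>Polyhedron in M(A) (PL structure induced from the affine covering R^3 -> M(A)):
its preimage in R^2 x R is a locally finite union of convex polytopes.\<close>
definition tb_polyhedron :: "int^2^2 \<Rightarrow> ((real^2) \<times> real) set set \<Rightarrow> bool" where
  "tb_polyhedron A P \<longleftrightarrow> P \<subseteq> tb_space A \<and>
     (\<exists>C. (\<forall>S\<in>C. polytope S) \<and>
          (\<forall>z. \<exists>N. open N \<and> z \<in> N \<and> finite {S\<in>C. S \<inter> N \<noteq> {}}) \<and>
          \<Union>C = \<Union>P)"

text \<open>Spine: a polyhedron whose complement is an open 3-cell.\<close>
definition tb_spine :: "int^2^2 \<Rightarrow> ((real^2) \<times> real) set set \<Rightarrow> bool" where
  "tb_spine A P \<longleftrightarrow> tb_polyhedron A P \<and>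
     subtopology (tb_top A) (tb_space A - P) homeomorphic_space (euclidean :: (real^3) topology)"

end

theory Submission
  imports Defs
begin


definition adjm :: "int^2^2 \<Rightarrow> int^2^2" where
  "adjm A = (\<chi> i j. if i = 1 then (if j = 1 then A$2$2 else - A$1$2) else (if j = 1 then - A$2$1 else A$1$1))"

lemma real_mat_mult: "real_mat (A ** B) = real_mat A ** real_mat B"
  by (simp add: real_mat_def matrix_matrix_mult_def vec_eq_iff)

lemma real_mat_one: "real_mat (mat 1) = mat 1"
  by (simp add: real_mat_def mat_def vec_eq_iff)

lemma adjm_mult: assumes "det A = 1" shows "A ** adjm A = mat 1" "adjm A ** A = mat 1"
  using assms by (auto simp: vec_eq_iff forall_2 det_2 adjm_def matrix_matrix_mult_def mat_def sum_2 algebra_simps)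

lemma lattice_mat: "u \<in> int_lattice \<Longrightarrow> real_mat M *v u \<in> int_lattice"
  unfolding int_lattice_def real_mat_def matrix_vector_mult_def
  by (auto intro!: Ints_sum Ints_mult)

lemma lattice_add: "u \<in> int_lattice \<Longrightarrow> v \<in> int_lattice \<Longrightarrow> u + v \<in> int_lattice"
  and lattice_diff: "u \<in> int_lattice \<Longrightarrow> v \<in> int_lattice \<Longrightarrow> u - v \<in> int_lattice"
  and lattice_minus: "u \<in> int_lattice \<Longrightarrow> - u \<in> int_lattice"
  and lattice_zero: "0 \<in> int_lattice"
  by (auto simp: int_lattice_def)



definition fm :: "int^2^2 \<Rightarrow> real^2 \<Rightarrow> real^2" where "fm A = (*v) (real_mat A)"
definition fim :: "int^2^2 \<Rightarrow> real^2 \<Rightarrow> real^2" where "fim A = (*v) (real_mat (adjm A))"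
definition E :: "int^2^2 \<Rightarrow> int \<Rightarrow> real^2 \<Rightarrow> real^2" where
  "E A n = (if 0 \<le> n then fm A ^^ nat n else fim A ^^ nat (-n))"

lemma fm_fim: "det A = 1 \<Longrightarrow> fm A (fim A x) = x"
  by (simp add: fm_def fim_def matrix_vector_mul_assoc adjm_mult real_mat_one flip: real_mat_mult)
lemma fim_fm: "det A = 1 \<Longrightarrow> fim A (fm A x) = x"
  by (simp add: fm_def fim_def matrix_vector_mul_assoc adjm_mult real_mat_one flip: real_mat_mult)

lemma E_0[simp]: "E A 0 x = x" by (simp add: E_def)

lemma E_succ: assumes "det A = 1" shows "E A (n+1) x = fm A (E A n x)"
proof (cases "0 \<le> n")
  case True
  then have "nat (n+1) = Suc (nat n)" by simp
  then show ?thesis using True by (simp add: E_def)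
next
  case False
  show ?thesis
  proof (cases "n = -1")
    case True then show ?thesis by (simp add: E_def fm_fim assms)
  next
    case F2: False
    then have "nat (-n) = Suc (nat (-(n+1)))" using False by simp
    then show ?thesis using False F2 by (simp add: E_def fm_fim assms)
  qed
qed

lemma E_pred: assumes "det A = 1" shows "E A (n - 1) x = fim A (E A n x)"
proof -
  have "fim A (E A n x) = fim A (E A ((n - 1) + 1) x)" by simp
  also have "\<dots> = E A (n - 1) x" by (simp only: E_succ[OF assms] fim_fm[OF assms])
  finally show ?thesis by simp
qed

lemma E_add: assumes "det A = 1" shows "E A m (E A n x) = E A (m + n) x"
proof (induction m rule: int_induct[where k=0])
  case base then show ?case by simp
next
  case (step1 i)
  then show ?case using E_succ[OF assms, of i] E_succ[OF assms, of "i + n"]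
    by (simp add: algebra_simps)
next
  case (step2 i)
  then show ?case using E_pred[OF assms, of i] E_pred[OF assms, of "i + n"]
    by (simp add: algebra_simps)
qed

lemma linear_funpow: fixes g :: "'a::real_vector \<Rightarrow> 'a" shows "linear g \<Longrightarrow> linear (g ^^ k)"
proof (induction k)
  case 0
  have "linear (\<lambda>x::'a. x)" by (rule linearI) auto
  moreover have "g ^^ 0 = (\<lambda>x. x)" by (simp add: fun_eq_iff)
  ultimately show ?case by simp
next
  case (Suc k)
  then have "linear (g \<circ> (g ^^ k))" by (intro linear_compose) auto
  then show ?case by (metis funpow.simps(2))
qed

lemma linear_E: "linear (E A n)"
  unfolding E_def fm_def fim_def
  by (auto intro!: linear_funpow matrix_vector_mul_linear)

lemma lattice_funpow: "(\<And>u. u \<in> int_lattice \<Longrightarrow> g u \<in> int_lattice) \<Longrightarrow> u \<in> int_lattice \<Longrightarrow> (g ^^ k) u \<in> int_lattice"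
  by (induction k) auto

lemma lattice_E: "u \<in> int_lattice \<Longrightarrow> E A n u \<in> int_lattice"
  unfolding E_def fm_def fim_def
  by (auto intro!: lattice_funpow lattice_mat)

definition dl :: "int^2^2 \<Rightarrow> int \<Rightarrow> real^2 \<Rightarrow> ((real^2) \<times> real) \<Rightarrow> ((real^2) \<times> real)" where
  "dl A n v z = (E A n (fst z) + v, snd z - of_int n)"

lemma tb_rel_char: assumes "det A = 1"
  shows "tb_rel A = {(z, dl A n v z) | z n v. v \<in> int_lattice}"
proof -
  have fE: "((*v) (real_mat A) ^^ k) = E A (int k)" for k
    by (simp add: E_def fm_def)
  have "(z, w) \<in> tb_rel A \<longleftrightarrow> (\<exists>n v. v \<in> int_lattice \<and> w = dl A n v z)" for z w
  proof
    assume "(z, w) \<in> tb_rel A"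
    then obtain n :: nat and v where v: "v \<in> int_lattice" and
      h: "(fst w = E A n (fst z) + v \<and> snd w = snd z - real n) \<or>
          (fst z = E A n (fst w) + v \<and> snd z = snd w - real n)"
      unfolding tb_rel_def fE by (cases z, cases w) auto
    from h show "\<exists>n v. v \<in> int_lattice \<and> w = dl A n v z"
    proof
      assume "fst w = E A n (fst z) + v \<and> snd w = snd z - real n"
      then show ?thesis using v by (intro exI[of _ "int n"] exI[of _ v]) (auto simp: dl_def prod_eq_iff)
    next
      assume h2: "fst z = E A n (fst w) + v \<and> snd z = snd w - real n"
      have "E A (- int n) (fst z) = E A (- int n) (E A n (fst w)) + E A (- int n) v"
        using h2 linear_add[OF linear_E] by simp
      also have "E A (- int n) (E A n (fst w)) = fst w" using E_add[OF assms] by simp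
      finally have "fst w = E A (- int n) (fst z) + (- E A (- int n) v)" by simp
      then show ?thesis using h2 v
        by (intro exI[of _ "- int n"] exI[of _ "- E A (- int n) v"])
          (auto simp: dl_def prod_eq_iff lattice_minus lattice_E)
    qed
  next
    assume "\<exists>n v. v \<in> int_lattice \<and> w = dl A n v z"
    then obtain n v where v: "v \<in> int_lattice" and w: "w = dl A n v z" by blast
    show "(z, w) \<in> tb_rel A"
    proof (cases "0 \<le> n")
      case True
      then have "fst w = E A (int (nat n)) (fst z) + v \<and> snd w = snd z - real (nat n)"
        using w by (simp add: dl_def)
      then show ?thesis using v unfolding tb_rel_def fE
        by (cases z, cases w) (auto intro!: exI[of _ "nat n"] bexI[of _ v])
    next
      case False
      define k where "k = nat (- n)"
      have n: "n = - int k" using False k_def by simp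
      have "E A k (fst w) = E A k (E A n (fst z)) + E A k v"
        using w linear_add[OF linear_E] by (simp add: dl_def)
      also have "E A k (E A n (fst z)) = fst z" using E_add[OF assms] n by simp
      finally have "fst z = E A (int k) (fst w) + (- E A k v) \<and> snd z = snd w - real k"
        using w n by (simp add: dl_def)
      then show ?thesis using v unfolding tb_rel_def fE
        by (cases z, cases w) (auto intro!: exI[of _ k] bexI[of _ "- E A k v"] simp: lattice_minus lattice_E)
    qed
  qed
  note * = this
  show ?thesis
  proof (rule set_eqI)
    fix p :: "((real^2) \<times> real) \<times> ((real^2) \<times> real)"
    obtain z w where "p = (z, w)" by (cases p)
    then show "p \<in> tb_rel A \<longleftrightarrow> p \<in> {(z, dl A n v z) | z n v. v \<in> int_lattice}" using * by blast
  qed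
qed



definition qm :: "int^2^2 \<Rightarrow> ((real^2) \<times> real) \<Rightarrow> ((real^2) \<times> real) set" where
  "qm A z = tb_rel A `` {z}"

context
  fixes A :: "int^2^2"
  assumes det1: "det A = 1"
begin

lemma dl_comp: "dl A m w (dl A n v z) = dl A (m + n) (E A m v + w) z"
  using E_add[OF det1] linear_add[OF linear_E]
  by (simp add: dl_def algebra_simps)

lemma dl_inv: "dl A (- n) (- E A (- n) v) (dl A n v z) = z"
  using E_add[OF det1, of "-n" n] linear_add[OF linear_E]
  by (simp add: dl_def prod_eq_iff)

lemma rel_iff: "(z, w) \<in> tb_rel A \<longleftrightarrow> (\<exists>n v. v \<in> int_lattice \<and> w = dl A n v z)"
  unfolding tb_rel_char[OF det1] by blast

lemma equiv_rel: "equiv UNIV (tb_rel A)"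
proof (rule equivI)
  have "(x,x) \<in> tb_rel A" for x
    unfolding rel_iff by (intro exI[of _ 0] exI[of _ 0]) (simp add: lattice_zero dl_def)
  then show "refl (tb_rel A)" by (auto simp: refl_on_def)
  show "sym (tb_rel A)"
    unfolding sym_def
  proof (intro allI impI)
    fix x y assume "(x, y) \<in> tb_rel A"
    then obtain n v where v: "v \<in> int_lattice" "y = dl A n v x" by (auto simp: rel_iff)
    then show "(y, x) \<in> tb_rel A"
      unfolding rel_iff using dl_inv[of n v x]
      by (intro exI[of _ "-n"] exI[of _ "- E A (- n) v"]) (auto simp: lattice_minus lattice_E)
  qed
  show "trans (tb_rel A)"
    unfolding trans_def
  proof (intro allI impI)
    fix x y z assume "(x, y) \<in> tb_rel A" "(y, z) \<in> tb_rel A"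
    then obtain n v m w where "v \<in> int_lattice" "y = dl A n v x" "w \<in> int_lattice" "z = dl A m w y"
      by (auto simp: rel_iff)
    then show "(x, z) \<in> tb_rel A"
      unfolding rel_iff using dl_comp
      by (intro exI[of _ "m + n"] exI[of _ "E A m v + w"]) (auto simp: lattice_add lattice_E)
  qed
qed auto

lemma in_qm: "z \<in> qm A z"
  unfolding qm_def by (rule equiv_class_self[OF equiv_rel]) simp

lemma qm_eq: "qm A z = qm A w \<longleftrightarrow> (z, w) \<in> tb_rel A"
  unfolding qm_def by (rule eq_equiv_class_iff[OF equiv_rel]) simp_all

lemma qm_space: "qm A z \<in> tb_space A"
  unfolding qm_def tb_space_def by (rule quotientI) simp

lemma space_qm: assumes "c \<in> tb_space A" "z \<in> c" shows "c = qm A z"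
proof -
  obtain x where x: "c = qm A x" using assms(1) unfolding tb_space_def qm_def by (blast elim: quotientE)
  then have "(x, z) \<in> tb_rel A" using assms(2) by (simp add: qm_def)
  then show ?thesis using x qm_eq by simp
qed

lemma space_eq: "tb_space A = range (qm A)"
proof
  show "tb_space A \<subseteq> range (qm A)"
  proof
    fix c assume c: "c \<in> tb_space A"
    then obtain x where "c = qm A x" unfolding tb_space_def qm_def by (blast elim: quotientE)
    then show "c \<in> range (qm A)" by simp
  qed
  show "range (qm A) \<subseteq> tb_space A" using qm_space by auto
qed

lemma Union_sub: assumes "U \<subseteq> tb_space A" shows "z \<in> \<Union>U \<longleftrightarrow> qm A z \<in> U"
proof
  assume "z \<in> \<Union>U"
  then obtain c where "c \<in> U" "z \<in> c" by auto
  moreover then have "c = qm A z" using assms space_qm[of c z] by blast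
  ultimately show "qm A z \<in> U" by simp
next
  assume "qm A z \<in> U" then show "z \<in> \<Union>U" using in_qm[of z] by blast
qed

lemma istop: "istopology (\<lambda>U. U \<subseteq> tb_space A \<and> open (\<Union>U))"
proof -
  have I: "S \<inter> T \<subseteq> tb_space A \<and> open (\<Union>(S \<inter> T))"
    if H: "S \<subseteq> tb_space A \<and> open (\<Union>S)" "T \<subseteq> tb_space A \<and> open (\<Union>T)" for S T
  proof -
    have "\<Union>(S \<inter> T) = \<Union>S \<inter> \<Union>T"
    proof (rule set_eqI)
      fix z
      have "S \<inter> T \<subseteq> tb_space A" using H by auto
      then show "z \<in> \<Union>(S \<inter> T) \<longleftrightarrow> z \<in> \<Union>S \<inter> \<Union>T"
        using H Union_sub[of S z] Union_sub[of T z] Union_sub[of "S \<inter> T" z] by simp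
    qed
    then show ?thesis using H by auto
  qed
  have U: "\<Union>K \<subseteq> tb_space A \<and> open (\<Union>(\<Union>K))"
    if "\<forall>S\<in>K. S \<subseteq> tb_space A \<and> open (\<Union>S)" for K
  proof -
    have "\<Union>(\<Union>K) = (\<Union>S\<in>K. \<Union>S)" by blast
    then show ?thesis using that by (auto intro!: open_UN)
  qed
  show ?thesis unfolding istopology_def using I U by blast
qed

lemma openin_tb: "openin (tb_top A) U \<longleftrightarrow> U \<subseteq> tb_space A \<and> open (\<Union>U)"
  unfolding tb_top_def using istop by simp

lemma topspace_tb: "topspace (tb_top A) = tb_space A"
proof -
  have "\<Union>(tb_space A) = UNIV" using in_qm qm_space by blast
  then have "openin (tb_top A) (tb_space A)" by (simp add: openin_tb)
  then have "tb_space A \<subseteq> topspace (tb_top A)" by (rule openin_subset)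
  moreover have "topspace (tb_top A) \<subseteq> tb_space A"
    unfolding topspace_def openin_tb by blast
  ultimately show ?thesis by blast
qed

lemma qm_cont: "continuous_map euclidean (tb_top A) (qm A)"
  unfolding continuous_map_def
proof (intro conjI allI impI)
  show "qm A \<in> topspace euclidean \<rightarrow> topspace (tb_top A)" using qm_space topspace_tb by auto
  fix U assume "openin (tb_top A) U"
  then have U: "U \<subseteq> tb_space A" "open (\<Union>U)" by (auto simp: openin_tb)
  have "{x \<in> topspace euclidean. qm A x \<in> U} = \<Union>U" using Union_sub[OF U(1)] by auto
  then show "openin euclidean {x \<in> topspace euclidean. qm A x \<in> U}" using U by simp
qed

lemma disp: assumes "(z, w) \<in> tb_rel A" "z \<noteq> w" shows "1 \<le> dist z w"
proof -
  obtain n v where v: "v \<in> int_lattice" "w = dl A n v z" using assms by (auto simp: rel_iff)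
  have zw: "z - w = (fst z - fst w, snd z - snd w)" by (simp add: prod_eq_iff)
  show ?thesis
  proof (cases "n = 0")
    case False
    then have "1 \<le> \<bar>snd z - snd w\<bar>" using v by (simp add: dl_def)
    also have "\<dots> \<le> norm (fst z - fst w, snd z - snd w)" using norm_snd_le[of "snd z - snd w" "fst z - fst w"] by simp
    finally show ?thesis using zw by (simp add: dist_norm)
  next
    case True
    then have w: "w = (fst z + v, snd z)" using v by (simp add: dl_def)
    then have "v \<noteq> 0" using assms by (auto simp: prod_eq_iff)
    then obtain i where i: "v $ i \<noteq> 0" by (auto simp: vec_eq_iff)
    have "v $ i \<in> \<int>" using v by (simp add: int_lattice_def)
    then have "1 \<le> \<bar>v $ i\<bar>" using i by (metis Ints_nonzero_abs_ge1)
    also have "\<dots> \<le> norm v" by (rule component_le_norm_cart)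
    also have "\<dots> = norm (fst z - fst w, snd z - snd w)" using w by (simp add: norm_Pair)
    finally show ?thesis using zw by (simp add: dist_norm)
  qed
qed

lemma proj_qm: "tb_proj (qm A z) = frac (snd z)"
proof -
  have "(SOME x. x \<in> qm A z) \<in> qm A z" using in_qm by (rule someI)
  then have "(z, SOME x. x \<in> qm A z) \<in> tb_rel A" by (simp add: qm_def)
  then obtain n v where "(SOME x. x \<in> qm A z) = dl A n v z"
    using rel_iff by blast
  then have "snd (SOME x. x \<in> qm A z) = snd z + of_int (- n)" by (simp add: dl_def)
  then show ?thesis unfolding tb_proj_def by (simp only: frac_add_of_int_right)
qed

end


lemma bl_E: "bounded_linear (E A n)" using linear_E[of A n] by (simp add: linear_conv_bounded_linear)
lemma bl_E2: "bounded_linear (\<lambda>z::(real^2) \<times> real. E A n (fst z))"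
  using bounded_linear_compose[OF bl_E[of A n] bounded_linear_fst] by (simp add: o_def)
lemma cont_dl: "continuous_on UNIV (dl A n v)"
proof -
  have c: "continuous_on UNIV (\<lambda>z::(real^2) \<times> real. E A n (fst z))"
    using bl_E2 by (rule linear_continuous_on)
  have "continuous_on UNIV (\<lambda>z::(real^2) \<times> real. (E A n (fst z) + v, snd z - of_int n))"
    by (intro continuous_on_Pair continuous_on_add continuous_on_diff c continuous_on_const
        continuous_on_snd continuous_on_id)
  moreover have "dl A n v = (\<lambda>z. (E A n (fst z) + v, snd z - of_int n))"
    by (simp add: fun_eq_iff dl_def)
  ultimately show ?thesis by simp
qed
lemma open_vim_dl: "open B \<Longrightarrow> open (dl A n v -` B)"
  using continuous_on_open_vimage[of UNIV "dl A n v"] cont_dl[of A n v] by auto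
context
  fixes A :: "int^2^2"
  assumes det1: "det A = 1"
begin

lemma rel_sym: "(z, w) \<in> tb_rel A \<Longrightarrow> (w, z) \<in> tb_rel A"
  using equiv_rel[OF det1] unfolding equiv_def sym_def by blast

lemma rel_trans: "(x, y) \<in> tb_rel A \<Longrightarrow> (y, z) \<in> tb_rel A \<Longrightarrow> (x, z) \<in> tb_rel A"
  using equiv_rel[OF det1] unfolding equiv_def trans_def by blast

lemma rel_dl: "v \<in> int_lattice \<Longrightarrow> (z, dl A n v z) \<in> tb_rel A"
  using rel_iff[OF det1] by blast

lemma dl_inv2: "dl A n v (dl A (- n) (- E A (- n) v) b) = b"
proof -
  have "dl A (- (- n)) (- E A (- (- n)) (- E A (- n) v)) (dl A (- n) (- E A (- n) v) b) = b"
    by (rule dl_inv[OF det1])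
  moreover have "E A n (E A (- n) v) = v" using E_add[OF det1, of n "-n"] by simp
  ultimately show ?thesis using linear_neg[OF linear_E] by simp
qed

lemma Union_qm_image: "\<Union>(qm A ` Q) = (\<Union>nv\<in>UNIV \<times> int_lattice. dl A (fst nv) (snd nv) -` Q)"
proof (rule set_eqI)
  fix w
  have "w \<in> \<Union>(qm A ` Q) \<longleftrightarrow> (\<exists>z\<in>Q. (z, w) \<in> tb_rel A)" by (auto simp: qm_def)
  also have "\<dots> \<longleftrightarrow> (\<exists>z\<in>Q. (w, z) \<in> tb_rel A)" using rel_sym by blast
  also have "\<dots> \<longleftrightarrow> (\<exists>n v. v \<in> int_lattice \<and> dl A n v w \<in> Q)"
  proof
    assume "\<exists>z\<in>Q. (w, z) \<in> tb_rel A"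
    then obtain z n v where "z \<in> Q" "v \<in> int_lattice" "z = dl A n v w" using rel_iff[OF det1] by blast
    then show "\<exists>n v. v \<in> int_lattice \<and> dl A n v w \<in> Q" by blast
  next
    assume "\<exists>n v. v \<in> int_lattice \<and> dl A n v w \<in> Q"
    then obtain n v where "v \<in> int_lattice" "dl A n v w \<in> Q" by blast
    then show "\<exists>z\<in>Q. (w, z) \<in> tb_rel A" using rel_dl by blast
  qed
  finally show "w \<in> \<Union>(qm A ` Q) \<longleftrightarrow> w \<in> (\<Union>nv\<in>UNIV \<times> int_lattice. dl A (fst nv) (snd nv) -` Q)"
    by auto
qed

lemma qm_open: "open Q \<Longrightarrow> openin (tb_top A) (qm A ` Q)"
  unfolding openin_tb[OF det1] Union_qm_image
  using qm_space[OF det1] by (auto intro!: open_UN open_vim_dl)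

end

lemma poly_closed: assumes "tb_polyhedron A P" shows "closed (\<Union>P)"
proof -
  obtain C where C: "\<forall>S\<in>C. polytope S" "\<forall>z. \<exists>N. open N \<and> z \<in> N \<and> finite {S\<in>C. S \<inter> N \<noteq> {}}"
    "\<Union>C = \<Union>P" using assms unfolding tb_polyhedron_def by blast
  have "\<forall>z\<in>- \<Union>C. \<exists>T. open T \<and> z \<in> T \<and> T \<subseteq> - \<Union>C"
  proof
    fix z assume z: "z \<in> - \<Union>C"
    obtain N where N: "open N" "z \<in> N" "finite {S\<in>C. S \<inter> N \<noteq> {}}" using C(2) by blast
    let ?F = "{S\<in>C. S \<inter> N \<noteq> {}}"
    have "\<forall>S\<in>?F. closed S" using C(1) by (auto intro: compact_imp_closed polytope_imp_compact)
    then have "closed (\<Union>?F)" using closed_Union[OF N(3)] by blast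
    then have "open (N - \<Union>?F)" by (rule open_Diff[OF N(1)])
    moreover have "z \<in> N - \<Union>?F" using z N(2) by auto
    moreover have "N - \<Union>?F \<subseteq> - \<Union>C" by blast
    ultimately show "\<exists>T. open T \<and> z \<in> T \<and> T \<subseteq> - \<Union>C" by blast
  qed
  then have "open (- \<Union>C)" using open_subopen by blast
  then show ?thesis using C(3) by (simp add: closed_def)
qed



context
  fixes A :: "int^2^2" and P :: "((real^2) \<times> real) set set"
    and \<phi> :: "((real^2) \<times> real) set \<Rightarrow> real^3" and \<psi> :: "real^3 \<Rightarrow> ((real^2) \<times> real) set"
  assumes det1: "det A = 1"
    and Psub: "P \<subseteq> tb_space A"
    and Pcl: "closed (\<Union>P)"
    and hm: "homeomorphic_maps (subtopology (tb_top A) (tb_space A - P)) (euclidean :: (real^3) topology) \<phi> \<psi>"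
begin

lemma top_XX: "topspace (subtopology (tb_top A) (tb_space A - P)) = tb_space A - P"
  by (auto simp: topspace_tb[OF det1])

lemma W_iff: "z \<in> - \<Union>P \<longleftrightarrow> qm A z \<in> tb_space A - P"
  using Union_sub[OF det1 Psub, of z] qm_space[OF det1, of z] by blast

lemma phi_cont: "continuous_map (subtopology (tb_top A) (tb_space A - P)) euclidean \<phi>"
  using hm by (simp add: homeomorphic_maps_def)

lemma psi_cont: "continuous_map euclidean (subtopology (tb_top A) (tb_space A - P)) \<psi>"
  using hm by (simp add: homeomorphic_maps_def)

lemma psi_in: "\<psi> y \<in> tb_space A - P"
proof -
  have "\<psi> ` topspace euclidean \<subseteq> topspace (subtopology (tb_top A) (tb_space A - P))"
    by (rule continuous_map_image_subset_topspace[OF psi_cont])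
  then show ?thesis unfolding top_XX by auto
qed

lemma psi_phi: "x \<in> tb_space A - P \<Longrightarrow> \<psi> (\<phi> x) = x"
  using hm top_XX by (simp add: homeomorphic_maps_def)

lemma phi_psi: "\<phi> (\<psi> y) = y"
  using hm by (simp add: homeomorphic_maps_def)

lemma phi_inj: "a \<in> tb_space A - P \<Longrightarrow> b \<in> tb_space A - P \<Longrightarrow> \<phi> a = \<phi> b \<Longrightarrow> a = b"
  using psi_phi by metis

lemma phi_open: "openin (subtopology (tb_top A) (tb_space A - P)) V \<Longrightarrow> open (\<phi> ` V)"
proof -
  assume V: "openin (subtopology (tb_top A) (tb_space A - P)) V"
  have "homeomorphic_map (subtopology (tb_top A) (tb_space A - P)) euclidean \<phi>"
    using hm homeomorphic_map_maps by blast
  then have "open_map (subtopology (tb_top A) (tb_space A - P)) euclidean \<phi>"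
    by (rule homeomorphic_imp_open_map)
  then show "open (\<phi> ` V)" using V unfolding open_map_def by simp
qed

lemma qm_cont_W: "continuous_map (top_of_set (- \<Union>P)) (subtopology (tb_top A) (tb_space A - P)) (qm A)"
  unfolding continuous_map_in_subtopology
proof
  show "continuous_map (top_of_set (- \<Union>P)) (tb_top A) (qm A)"
    by (rule continuous_map_from_subtopology[OF qm_cont[OF det1]])
  show "qm A \<in> topspace (top_of_set (- \<Union>P)) \<rightarrow> tb_space A - P"
    using W_iff by auto
qed

lemma p_cont: "continuous_on (- \<Union>P) (\<phi> \<circ> qm A)"
  using continuous_map_compose[OF qm_cont_W phi_cont] by simp

lemma p_open: assumes "open Q" "Q \<subseteq> - \<Union>P" shows "open ((\<phi> \<circ> qm A) ` Q)"
proof -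
  have o: "openin (tb_top A) (qm A ` Q)" using qm_open[OF det1 assms(1)] .
  have s: "qm A ` Q \<subseteq> tb_space A - P" using assms(2) W_iff by auto
  have "openin (subtopology (tb_top A) (tb_space A - P)) (qm A ` Q)"
    unfolding openin_subtopology using o s by blast
  then have "open (\<phi> ` (qm A ` Q))" by (rule phi_open)
  then show ?thesis by (simp add: image_comp)
qed

lemma rel_ball: assumes "a \<in> ball z e" "b \<in> ball z e" "e \<le> 1/2" "(a, b) \<in> tb_rel A" shows "a = b"
proof (rule ccontr)
  assume "a \<noteq> b"
  then have "1 \<le> dist a b" using disp[OF det1 assms(4)] by simp
  moreover have "dist a b \<le> dist a z + dist z b" by (rule dist_triangle)
  moreover have "dist a z < e" "dist z b < e" using assms(1,2) by (auto simp: dist_commute)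
  ultimately show False using assms(3) by linarith
qed


lemma qm_dl: "v \<in> int_lattice \<Longrightarrow> qm A (dl A n v x) = qm A x"
  using qm_eq[OF det1, of x "dl A n v x"] rel_dl[OF det1, of v x n] by simp

lemma sheet_sub: assumes "ball z e \<subseteq> - \<Union>P" "v \<in> int_lattice" shows "dl A n v -` ball z e \<subseteq> - \<Union>P"
proof
  fix x assume "x \<in> dl A n v -` ball z e"
  then have "dl A n v x \<in> - \<Union>P" using assms(1) by auto
  then have "qm A (dl A n v x) \<in> tb_space A - P" using W_iff by blast
  then show "x \<in> - \<Union>P" using W_iff qm_dl[OF assms(2)] by simp
qed

lemma sheet_img: assumes "v \<in> int_lattice"
  shows "(\<phi> \<circ> qm A) ` (dl A n v -` ball z e) = (\<phi> \<circ> qm A) ` ball z e"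
proof
  show "(\<phi> \<circ> qm A) ` (dl A n v -` ball z e) \<subseteq> (\<phi> \<circ> qm A) ` ball z e"
  proof
    fix y assume "y \<in> (\<phi> \<circ> qm A) ` (dl A n v -` ball z e)"
    then obtain x where x0: "x \<in> dl A n v -` ball z e" "y = (\<phi> \<circ> qm A) x" by blast
    then have x: "dl A n v x \<in> ball z e" "y = \<phi> (qm A x)" by auto
    then have "y = (\<phi> \<circ> qm A) (dl A n v x)" using qm_dl[OF assms] by simp
    then show "y \<in> (\<phi> \<circ> qm A) ` ball z e" using x(1) by blast
  qed
  show "(\<phi> \<circ> qm A) ` ball z e \<subseteq> (\<phi> \<circ> qm A) ` (dl A n v -` ball z e)"
  proof
    fix y assume "y \<in> (\<phi> \<circ> qm A) ` ball z e"
    then obtain b where b: "b \<in> ball z e" "y = \<phi> (qm A b)" by auto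
    define x where "x = dl A (- n) (- E A (- n) v) b"
    have "dl A n v x = b" unfolding x_def by (rule dl_inv2[OF det1])
    then have "x \<in> dl A n v -` ball z e" "y = (\<phi> \<circ> qm A) x" using b qm_dl[OF assms, of n x] by auto
    then show "y \<in> (\<phi> \<circ> qm A) ` (dl A n v -` ball z e)" by blast
  qed
qed

lemma sheet_inj: assumes "ball z e \<subseteq> - \<Union>P" "e \<le> 1/2" "v \<in> int_lattice"
  shows "inj_on (\<phi> \<circ> qm A) (dl A n v -` ball z e)"
proof (rule inj_onI)
  fix x1 x2 assume x: "x1 \<in> dl A n v -` ball z e" "x2 \<in> dl A n v -` ball z e"
    "(\<phi> \<circ> qm A) x1 = (\<phi> \<circ> qm A) x2"
  have "x1 \<in> - \<Union>P" "x2 \<in> - \<Union>P" using x(1,2) sheet_sub[OF assms(1,3), of n] by blast+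
  then have "qm A x1 = qm A x2" using phi_inj W_iff x(3) by auto
  then have "qm A (dl A n v x1) = qm A (dl A n v x2)" using qm_dl[OF assms(3)] by simp
  then have "(dl A n v x1, dl A n v x2) \<in> tb_rel A" using qm_eq[OF det1] by blast
  then have "dl A n v x1 = dl A n v x2" using rel_ball[OF _ _ assms(2)] x(1,2) by auto
  then have "dl A (- n) (- E A (- n) v) (dl A n v x1) = dl A (- n) (- E A (- n) v) (dl A n v x2)" by simp
  then show "x1 = x2" by (simp only: dl_inv[OF det1])
qed

lemma sheet_homeo: assumes "ball z e \<subseteq> - \<Union>P" "e \<le> 1/2" "v \<in> int_lattice"
  shows "\<exists>q. homeomorphism (dl A n v -` ball z e) ((\<phi> \<circ> qm A) ` ball z e) (\<phi> \<circ> qm A) q"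
proof -
  let ?S = "dl A n v -` ball z e"
  have So: "open ?S" by (rule open_vim_dl) simp
  obtain q where "homeomorphism ?S ((\<phi> \<circ> qm A) ` ball z e) (\<phi> \<circ> qm A) q"
  proof (rule homeomorphism_injective_open_map)
    show "continuous_on ?S (\<phi> \<circ> qm A)"
      by (rule continuous_on_subset[OF p_cont sheet_sub[OF assms(1,3)]])
    show "(\<phi> \<circ> qm A) ` ?S = (\<phi> \<circ> qm A) ` ball z e" by (rule sheet_img[OF assms(3)])
    show "inj_on (\<phi> \<circ> qm A) ?S" by (rule sheet_inj[OF assms])
    fix U' assume U': "openin (top_of_set ?S) U'"
    then have "open U'" using openin_open_trans So by blast
    moreover have "U' \<subseteq> ?S" using openin_imp_subset[OF U'] .
    ultimately have "open ((\<phi> \<circ> qm A) ` U')" using p_open sheet_sub[OF assms(1,3)] by blast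
    moreover have "(\<phi> \<circ> qm A) ` U' \<subseteq> (\<phi> \<circ> qm A) ` ball z e"
      using \<open>U' \<subseteq> ?S\<close> sheet_img[OF assms(3), of n z e] by blast
    ultimately show "openin (top_of_set ((\<phi> \<circ> qm A) ` ball z e)) ((\<phi> \<circ> qm A) ` U')"
      unfolding openin_open by blast
  qed
  then show ?thesis by blast
qed

lemma sheet_disj: assumes "e \<le> 1/2" "v \<in> int_lattice" "w \<in> int_lattice"
    "x \<in> dl A n v -` ball z e" "x \<in> dl A m w -` ball z e"
  shows "n = m \<and> v = w"
proof -
  have "(dl A n v x, x) \<in> tb_rel A" using rel_sym[OF det1 rel_dl[OF det1 assms(2)]] .
  then have "(dl A n v x, dl A m w x) \<in> tb_rel A" using rel_trans[OF det1 _ rel_dl[OF det1 assms(3)]] by blast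
  then have eq: "dl A n v x = dl A m w x" using rel_ball[OF _ _ assms(1)] assms(4,5) by auto
  then have "snd x - of_int n = snd x - of_int m" by (simp add: dl_def)
  then have nm: "n = m" by simp
  then have "E A n (fst x) + v = E A n (fst x) + w" using eq by (simp add: dl_def)
  then show ?thesis using nm by simp
qed

lemma cov: "covering_space (- \<Union>P) (\<phi> \<circ> qm A) UNIV"
  unfolding covering_space_def
proof (intro conjI ballI)
  show "continuous_on (- \<Union>P) (\<phi> \<circ> qm A)" by (rule p_cont)
  show "(\<phi> \<circ> qm A) ` (- \<Union>P) = UNIV"
  proof (rule set_eqI, rule iffI)
    fix y :: "real^3"
    obtain z where z: "\<psi> y = qm A z" using psi_in space_eq[OF det1] by blast
    then have "qm A z \<in> tb_space A - P" using psi_in[of y] by simp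
    then have "z \<in> - \<Union>P" using W_iff by blast
    moreover have "y = (\<phi> \<circ> qm A) z" using z phi_psi[of y] by simp
    ultimately show "y \<in> (\<phi> \<circ> qm A) ` (- \<Union>P)" by blast
  qed simp
  fix y :: "real^3" assume "y \<in> UNIV"
  obtain z where z: "\<psi> y = qm A z" using psi_in space_eq[OF det1] by blast
  then have "qm A z \<in> tb_space A - P" using psi_in[of y] by simp
  then have zW: "z \<in> - \<Union>P" using W_iff by blast
  have "open (- \<Union>P)" using Pcl by (simp add: open_Compl)
  then obtain e0 where e0: "e0 > 0" "ball z e0 \<subseteq> - \<Union>P" using zW open_contains_ball by blast
  define e where "e = min e0 (1/2)"
  have e: "e > 0" "e \<le> 1/2" "ball z e \<subseteq> - \<Union>P" using e0 by (auto simp: e_def)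
  define T where "T = (\<phi> \<circ> qm A) ` ball z e"
  define V where "V = (\<lambda>nv. dl A (fst nv) (snd nv) -` ball z e) ` (UNIV \<times> int_lattice)"
  have "y \<in> T" unfolding T_def using z phi_psi[of y] e(1) by (auto intro!: image_eqI[of _ _ z])
  moreover have "openin (top_of_set UNIV) T" unfolding T_def using p_open[OF _ e(3)] by simp
  moreover have "\<Union>V = - \<Union>P \<inter> (\<phi> \<circ> qm A) -` T"
  proof
    show "\<Union>V \<subseteq> - \<Union>P \<inter> (\<phi> \<circ> qm A) -` T"
    proof
      fix x assume "x \<in> \<Union>V"
      then obtain n v where nv: "v \<in> int_lattice" "x \<in> dl A n v -` ball z e" unfolding V_def by auto
      then have "x \<in> - \<Union>P" using sheet_sub[OF e(3) nv(1)] by blast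
      moreover have "(\<phi> \<circ> qm A) x \<in> T" using nv sheet_img[OF nv(1), of n z e] unfolding T_def by blast
      ultimately show "x \<in> - \<Union>P \<inter> (\<phi> \<circ> qm A) -` T" by simp
    qed
    show "- \<Union>P \<inter> (\<phi> \<circ> qm A) -` T \<subseteq> \<Union>V"
    proof
      fix x assume x: "x \<in> - \<Union>P \<inter> (\<phi> \<circ> qm A) -` T"
      then obtain b where b: "b \<in> ball z e" "\<phi> (qm A x) = \<phi> (qm A b)" unfolding T_def by auto
      have "x \<in> - \<Union>P" "b \<in> - \<Union>P" using x b(1) e(3) by auto
      then have "qm A x \<in> tb_space A - P" "qm A b \<in> tb_space A - P" using W_iff by blast+
      then have "qm A x = qm A b" using phi_inj b(2) by blast
      then have "(x, b) \<in> tb_rel A" using qm_eq[OF det1] by blast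
      then obtain n v where "v \<in> int_lattice" "b = dl A n v x" using rel_iff[OF det1] by blast
      then show "x \<in> \<Union>V" unfolding V_def using b(1) by (auto intro!: bexI[of _ "(n, v)"])
    qed
  qed
  moreover have "\<forall>u\<in>V. openin (top_of_set (- \<Union>P)) u"
  proof
    fix u assume "u \<in> V"
    then obtain n v where nv: "v \<in> int_lattice" "u = dl A n v -` ball z e" unfolding V_def by auto
    have "open u" unfolding nv(2) by (rule open_vim_dl) simp
    moreover have "u \<subseteq> - \<Union>P" unfolding nv(2) by (rule sheet_sub[OF e(3) nv(1)])
    ultimately show "openin (top_of_set (- \<Union>P)) u" unfolding openin_open by blast
  qed
  moreover have "pairwise disjnt V"
    unfolding pairwise_def
  proof (intro ballI impI)
    fix s t assume st: "s \<in> V" "t \<in> V" "s \<noteq> t"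
    obtain n v where nv1: "v \<in> int_lattice" "s = dl A n v -` ball z e" using st(1) unfolding V_def by auto
    obtain m w where nv2: "w \<in> int_lattice" "t = dl A m w -` ball z e" using st(2) unfolding V_def by auto
    note nv = nv1 nv2
    show "disjnt s t"
    proof (rule ccontr)
      assume "\<not> disjnt s t"
      then obtain x where "x \<in> s" "x \<in> t" by (auto simp: disjnt_def)
      then have "n = m \<and> v = w" using sheet_disj[OF e(2) nv(1) nv(3)] nv by blast
      then show False using st(3) nv by simp
    qed
  qed
  moreover have "\<forall>u\<in>V. \<exists>q. homeomorphism u T (\<phi> \<circ> qm A) q"
  proof
    fix u assume "u \<in> V"
    then obtain n v where nv: "v \<in> int_lattice" "u = dl A n v -` ball z e" unfolding V_def by auto
    show "\<exists>q. homeomorphism u T (\<phi> \<circ> qm A) q"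
      unfolding nv(2) T_def by (rule sheet_homeo[OF e(3) e(2) nv(1)])
  qed
  ultimately show "\<exists>T. y \<in> T \<and> openin (top_of_set UNIV) T \<and>
        (\<exists>v. \<Union>v = - \<Union>P \<inter> (\<phi> \<circ> qm A) -` T \<and> (\<forall>u\<in>v. openin (top_of_set (- \<Union>P)) u) \<and>
             pairwise disjnt v \<and> (\<forall>u\<in>v. \<exists>q. homeomorphism u T (\<phi> \<circ> qm A) q))"
    by blast
qed

end



theorem lemma7:
  fixes A :: "int^2^2" and P :: "((real^2) \<times> real) set set" and t :: real
    and g :: "real \<Rightarrow> ((real^2) \<times> real) set"
  assumes "det A = 1"
    and "tb_spine A P"
    and "pathin (subtopology (tb_top A) (tb_fiber A t)) g"
    and "g 0 = g 1"
    and "\<not> homotopic_with (\<lambda>h. h 0 = g 0 \<and> h 1 = g 0)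
             (subtopology euclideanreal {0..1}) (subtopology (tb_top A) (tb_fiber A t))
             g (\<lambda>_. g 0)"
  shows "\<exists>s\<in>{0..1}. g s \<in> P \<inter> tb_fiber A t"
proof (rule ccontr)
  assume nP: "\<not> (\<exists>s\<in>{0..1}. g s \<in> P \<inter> tb_fiber A t)"
  note det1 = assms(1)
  have poly: "tb_polyhedron A P"
    and hs: "subtopology (tb_top A) (tb_space A - P) homeomorphic_space (euclidean :: (real^3) topology)"
    using assms(2) by (simp_all add: tb_spine_def)
  have Psub: "P \<subseteq> tb_space A" using poly by (simp add: tb_polyhedron_def)
  have Pcl: "closed (\<Union>P)" by (rule poly_closed[OF poly])
  obtain \<phi> :: "((real^2) \<times> real) set \<Rightarrow> real^3" and \<psi>
    where hm: "homeomorphic_maps (subtopology (tb_top A) (tb_space A - P)) euclidean \<phi> \<psi>"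
    using hs unfolding homeomorphic_space_def by blast
  note cv = cov[OF det1 Psub Pcl hm]
  obtain s where sc: "continuous_on UNIV s" and sW: "s \<in> UNIV \<rightarrow> - \<Union>P"
    and sp: "\<And>y. (\<phi> \<circ> qm A) (s y) = y"
  proof (rule covering_space_lift[OF cv])
    show "simply_connected (UNIV :: (real^3) set)" by (rule convex_imp_simply_connected) simp
    show "locally path_connected (UNIV :: (real^3) set)" by (rule locally_path_connected_UNIV)
    show "continuous_on UNIV (\<lambda>x::real^3. x)" by (rule continuous_on_id)
    show "(\<lambda>x::real^3. x) \<in> UNIV \<rightarrow> UNIV" by simp
  qed auto
  have gcF: "continuous_map (top_of_set {0..1}) (subtopology (tb_top A) (tb_fiber A t)) g"
    using assms(3) by (simp add: pathin_def)
  have gF: "g x \<in> tb_fiber A t" if "x \<in> {0..1}" for x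
    using continuous_map_image_subset_topspace[OF gcF] that by auto
  have Fsub: "tb_fiber A t \<subseteq> tb_space A" by (auto simp: tb_fiber_def)
  have gU: "g x \<in> tb_space A - P" if "x \<in> {0..1}" for x
    using gF[OF that] nP that Fsub by blast
  have gcU: "continuous_map (top_of_set {0..1}) (subtopology (tb_top A) (tb_space A - P)) g"
    unfolding continuous_map_in_subtopology
    using continuous_map_into_fulltopology[OF gcF] gU by auto
  have "continuous_map (top_of_set {0..1}) euclidean (\<phi> \<circ> g)"
    by (rule continuous_map_compose[OF gcU phi_cont[OF det1 Psub Pcl hm]])
  then have pgc: "continuous_on {0..1} (\<phi> \<circ> g)" by simp
  define gh where "gh = s \<circ> (\<phi> \<circ> g)"
  have ghc: "continuous_on {0..1} gh"
    unfolding gh_def by (rule continuous_on_compose[OF pgc continuous_on_subset[OF sc]]) simp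
  have qgh: "qm A (gh x) = g x" if x: "x \<in> {0..1}" for x
  proof -
    have "gh x \<in> - \<Union>P" using sW by (auto simp: gh_def)
    then have a: "qm A (gh x) \<in> tb_space A - P" using W_iff[OF det1 Psub Pcl hm] by blast
    have "\<phi> (qm A (gh x)) = \<phi> (g x)" using sp[of "\<phi> (g x)"] by (simp add: gh_def)
    then show ?thesis using phi_inj[OF det1 Psub Pcl hm a gU[OF x]] by simp
  qed
  have fr: "frac (snd (gh x)) = frac t" if x: "x \<in> {0..1}" for x
  proof -
    have "tb_proj (qm A (gh x)) = frac (snd (gh x))" by (rule proj_qm[OF det1])
    moreover have "tb_proj (g x) = frac t" using gF[OF x] by (simp add: tb_fiber_def)
    ultimately show ?thesis using qgh[OF x] by simp
  qed
  define h where "h x = snd (gh x) - t" for x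
  have hint: "h x \<in> \<int>" if xx: "x \<in> {0..1}" for x
  proof -
    have fx: "frac (snd (gh x)) = frac t" by (rule fr[OF xx])
    obtain k where "snd (gh x) = t + of_int k" using fx by (rule frac_eqE)
    then show ?thesis by (simp add: h_def)
  qed
  have hc: "continuous_on {0..1} h"
    unfolding h_def[abs_def]
    by (intro continuous_on_diff continuous_on_const continuous_on_compose2[OF continuous_on_snd[OF continuous_on_id] ghc]) auto
  have "h constant_on {0..1}"
  proof (rule continuous_discrete_range_constant[OF _ hc])
    show "connected {0..1::real}" by simp
    fix x :: real assume x: "x \<in> {0..1}"
    show "\<exists>e>0. \<forall>y. y \<in> {0..1} \<and> h y \<noteq> h x \<longrightarrow> e \<le> norm (h y - h x)"
    proof (intro exI[of _ 1] conjI allI impI)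
      fix y assume y: "y \<in> {0..1} \<and> h y \<noteq> h x"
      then have "h y - h x \<in> \<int>" "h y - h x \<noteq> 0" using hint x by auto
      then have "1 \<le> \<bar>h y - h x\<bar>" by (intro Ints_nonzero_abs_ge1) auto
      then show "1 \<le> norm (h y - h x)" by simp
    qed simp
  qed
  then obtain c0 where c0: "\<And>x. x \<in> {0..1} \<Longrightarrow> h x = c0" by (auto simp: constant_on_def)
  define c where "c = c0 + t"
  have sndc: "snd (gh x) = c" if "x \<in> {0..1}" for x using c0[OF that] by (simp add: h_def c_def)
  have frc: "frac c = frac t" using fr[of 0] sndc[of 0] by simp
  have gh10: "gh 1 = gh 0" using assms(4) by (simp add: gh_def)
  define H0 where "H0 p = qm A ((1 - fst p) *\<^sub>R gh (snd p) + fst p *\<^sub>R gh 0)" for p :: "real \<times> real"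
  define H where "H p = (if fst p = 0 then g (snd p) else if fst p = 1 then g 0 else H0 p)" for p :: "real \<times> real"
  have linc: "continuous_on ({0..1} \<times> {0..1}) (\<lambda>p::real \<times> real. (1 - fst p) *\<^sub>R gh (snd p) + fst p *\<^sub>R gh 0)"
  proof -
    have "continuous_on ({0..1} \<times> {0..1}) (\<lambda>p::real \<times> real. gh (snd p))"
      by (rule continuous_on_compose2[OF ghc continuous_on_snd[OF continuous_on_id]]) auto
    then show ?thesis
      by (intro continuous_on_add continuous_on_scaleR continuous_on_diff continuous_on_const
          continuous_on_fst continuous_on_id)
  qed
  have H0c: "continuous_map (top_of_set ({0..1} \<times> {0..1})) (subtopology (tb_top A) (tb_fiber A t)) H0"
    unfolding continuous_map_in_subtopology
  proof
    have "continuous_map (top_of_set ({0..1} \<times> {0..1})) euclidean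
            (\<lambda>p::real \<times> real. (1 - fst p) *\<^sub>R gh (snd p) + fst p *\<^sub>R gh 0)"
      using linc by simp
    then have "continuous_map (top_of_set ({0..1} \<times> {0..1})) (tb_top A)
            (qm A \<circ> (\<lambda>p::real \<times> real. (1 - fst p) *\<^sub>R gh (snd p) + fst p *\<^sub>R gh 0))"
      by (rule continuous_map_compose[OF _ qm_cont[OF det1]])
    then show "continuous_map (top_of_set ({0..1} \<times> {0..1})) (tb_top A) H0"
      unfolding H0_def[abs_def] by (simp add: o_def)
    show "H0 \<in> topspace (top_of_set ({0..1} \<times> {0..1})) \<rightarrow> tb_fiber A t"
    proof
      fix p :: "real \<times> real" assume "p \<in> topspace (top_of_set ({0..1} \<times> {0..1}))"
      then have p: "snd p \<in> {0..1}" by auto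
      have "snd ((1 - fst p) *\<^sub>R gh (snd p) + fst p *\<^sub>R gh 0) = (1 - fst p) * c + fst p * c"
        using sndc[OF p] sndc[of 0] by simp
      also have "\<dots> = c" by (simp add: algebra_simps)
      finally have "tb_proj (H0 p) = frac t" unfolding H0_def using proj_qm[OF det1] frc by simp
      then show "H0 p \<in> tb_fiber A t" unfolding tb_fiber_def H0_def using qm_space[OF det1] by simp
    qed
  qed
  have "homotopic_with (\<lambda>h. h 0 = g 0 \<and> h 1 = g 0)
             (subtopology euclideanreal {0..1}) (subtopology (tb_top A) (tb_fiber A t))
             g (\<lambda>_. g 0)"
    unfolding homotopic_with_def
  proof (intro exI[of _ H] conjI allI ballI)
    show "continuous_map (prod_topology (top_of_set {0..1}) (top_of_set {0..1}))
            (subtopology (tb_top A) (tb_fiber A t)) H"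
    proof -
      have "continuous_map (top_of_set ({0..1} \<times> {0..1})) (subtopology (tb_top A) (tb_fiber A t)) H"
      proof (rule continuous_map_eq[OF H0c])
        fix p :: "real \<times> real" assume "p \<in> topspace (top_of_set ({0..1} \<times> {0..1}))"
        then have p: "snd p \<in> {0..1}" by auto
        show "H0 p = H p"
        proof (cases "fst p = 0")
          case True then show ?thesis using qgh[OF p] by (simp add: H_def H0_def)
        next
          case False
          then show ?thesis
          proof (cases "fst p = 1")
            case True then show ?thesis using qgh[of 0] False by (simp add: H_def H0_def)
          qed (simp add: H_def)
        qed
      qed
      then show ?thesis by simp
    qed
    fix x
    show "H (0, x) = g x" by (simp add: H_def)
    show "H (1, x) = g 0" by (simp add: H_def)
  next
    fix u :: real assume u: "u \<in> {0..1}"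
    have e1: "(1 - u) *\<^sub>R gh 0 + u *\<^sub>R gh 0 = gh 0" by (simp add: algebra_simps)
    show "H (u, 0) = g 0"
      using qgh[of 0] e1 by (simp add: H_def H0_def)
    show "H (u, 1) = g 0"
      using qgh[of 0] e1 gh10 assms(4) by (simp add: H_def H0_def)
  qed
  then show False using assms(5) by simp
qed

end
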